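(* Fix a prime $p$ and let $\mathbb{L}_p(r)=|r|+\|r\|_p$ on $\mathbb{Z}[\tfrac1p]$. Then $\mathbb{Z}[\tfrac1p]$ has the property of bounded $p$-dilation with respect to $\mathbb{L}_p$. In particular, $\mathbb{L}_p$ is of bounded doubling with constant $C_{\mathbb{L}_p}=4p^8$, i.e. $|B_{\mathbb{L}_p}(2R)|\le 4p^8\,|B_{\mathbb{L}_p}(R)|$ for all $R\ge 1$.
   Context: $\mathbb{Z}[\tfrac1p]=\{a/p^k: a\in\mathbb{Z},k\in\mathbb{N}\}$ as an additive discrete group; $|r|$ is the absolute value and $\|\cdot\|_p$ is the $p$-adic norm ($\|0\|_p=0$, $\|r\|_p=p^{-n}$ if $r=ap^n/b$ with $a,b$ coprime to $p$ and to each other). For a length function $\mathbb{L}$ on a discrete group $\Gamma$, $B_{\mathbb{L}}(R)=\{\gamma:\mathbb{L}(\gamma)\le R\}$. $\mathbb{L}$ is proper if all $B_{\mathbb{L}}(R)$ are finite. $\Gamma$ has bounded ${\bf t}$-dilation ($\mathbf t>1$) with respect to $\mathbb{L}$ if $\mathbb{L}$ is proper and there is $K<\infty$ with $|B_{\mathbb{L}}(\mathbf tR)|\le K|B_{\mathbb{L}}(R)|$ for all $R\ge1$. $\mathbb{L}$ is of bounded doubling with constant $C$ if $\mathbb{L}$ is proper and $|B_{\mathbb{L}}(2R)|\le C|B_{\mathbb{L}}(R)|$ for all $R\ge1$. *)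

theory Defs
  imports "HOL-Computational_Algebra.Computational_Algebra"
begin

definition Zinvp :: "nat \<Rightarrow> rat set" where
  "Zinvp p = {of_int a / of_nat p ^ k | a k. True}"

definition padic_norm :: "nat \<Rightarrow> rat \<Rightarrow> real" where
  "padic_norm p r = (if r = 0 then 0 else
     (let (a, b) = quotient_of r in
      real p powi (int (multiplicity (int p) b) - int (multiplicity (int p) a))))"

definition Lp :: "nat \<Rightarrow> rat \<Rightarrow> real" where
  "Lp p r = real_of_rat \<bar>r\<bar> + padic_norm p r"

definition ball_L :: "'a set \<Rightarrow> ('a \<Rightarrow> real) \<Rightarrow> real \<Rightarrow> 'a set" where
  "ball_L G L R = {g \<in> G. L g \<le> R}"

definition proper_L :: "'a set \<Rightarrow> ('a \<Rightarrow> real) \<Rightarrow> bool" where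
  "proper_L G L \<longleftrightarrow> (\<forall>R. finite (ball_L G L R))"

definition bounded_dilation :: "'a set \<Rightarrow> ('a \<Rightarrow> real) \<Rightarrow> real \<Rightarrow> bool" where
  "bounded_dilation G L t \<longleftrightarrow> proper_L G L \<and>
     (\<exists>K::real. \<forall>R\<ge>1. real (card (ball_L G L (t * R))) \<le> K * real (card (ball_L G L R)))"

definition bounded_doubling :: "'a set \<Rightarrow> ('a \<Rightarrow> real) \<Rightarrow> real \<Rightarrow> bool" where
  "bounded_doubling G L C \<longleftrightarrow> proper_L G L \<and>
     (\<forall>R\<ge>1. real (card (ball_L G L (2 * R))) \<le> C * real (card (ball_L G L R)))"

end

theory Submission
  imports Defs
begin

lemma core:
  fixes p :: nat and j :: int and r :: rat
  assumes pr: "prime p" and r: "r = of_int j / of_nat p ^ k" and rnz: "r \<noteq> 0"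
  obtains a m where "r = of_int a / of_nat p ^ m" "m \<le> k"
    "padic_norm p r \<le> real p ^ m" "m > 0 \<Longrightarrow> padic_norm p r = real p ^ m"
proof -
  obtain a b where q: "quotient_of r = (a, b)" by (cases "quotient_of r") auto
  have bpos: "b > 0" using quotient_of_denom_pos[OF q] .
  have cop: "coprime a b" using quotient_of_coprime[OF q] .
  have rab: "r = of_int a / of_int b" using quotient_of_div[OF q] .
  have p0: "p > 1" using pr prime_gt_1_nat by blast
  have pi: "prime (int p)" using pr by simp
  have "of_int a / of_int b = (of_int j / of_int (int p ^ k) :: rat)" using r rab by simp
  hence "of_int (a * int p ^ k) = (of_int (j * b) :: rat)" using bpos p0
    by (simp add: field_simps)
  hence eq: "a * int p ^ k = j * b" by linarith
  have "b dvd a * int p ^ k" using eq by simp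
  hence "b dvd int p ^ k" using cop by (metis coprime_commute coprime_dvd_mult_right_iff)
  then obtain m where mk: "m \<le> k" and nb: "normalize b = int p ^ m"
    using divides_primepow[OF pi] by blast
  have bm: "b = int p ^ m" using nb bpos by simp
  have rr: "r = of_int a / of_nat p ^ m" using rab bm by simp
  have vb: "multiplicity (int p) b = m" using bm pi
    by (simp add: multiplicity_same_power prime_gt_0_int not_prime_unit)
  have nr: "padic_norm p r = real p powi (int m - int (multiplicity (int p) a))"
    using rnz q vb by (simp add: padic_norm_def)
  have le: "padic_norm p r \<le> real p ^ m"
  proof -
    have "real p powi (int m - int (multiplicity (int p) a)) \<le> real p powi (int m)"
      using p0 by (intro power_int_increasing) auto
    thus ?thesis using nr by (simp add: power_int_of_nat)
  qed
  have eqm: "padic_norm p r = real p ^ m" if "m > 0"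
  proof -
    have "int p dvd b" using bm that by simp
    hence "\<not> int p dvd a" using cop pi
      by (meson coprime_common_divisor not_prime_unit)
    hence "multiplicity (int p) a = 0" by (rule not_dvd_imp_multiplicity_0)
    thus ?thesis using nr by (simp add: power_int_of_nat)
  qed
  show ?thesis using that rr mk le eqm by blast
qed

lemma pn_nonneg: "p > 0 \<Longrightarrow> padic_norm p r \<ge> 0"
  unfolding padic_norm_def by (auto split: prod.split)

lemma Lp_nonneg: "p > 0 \<Longrightarrow> Lp p r \<ge> 0"
  using pn_nonneg[of p r] unfolding Lp_def by simp

lemma ratabs: "real_of_rat \<bar>rat_of_int j\<bar> = \<bar>real_of_int j\<bar>"
  by (metis of_int_abs of_rat_of_int_eq)

lemma upper:
  fixes p :: nat and R :: real
  assumes pr: "prime p" and RK: "R < real p ^ (K+1)"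
  shows "ball_L (Zinvp p) (Lp p) R \<subseteq>
     (\<lambda>j. of_int j / of_nat p ^ K :: rat) ` {-\<lfloor>R * real p ^ K\<rfloor>..\<lfloor>R * real p ^ K\<rfloor>}"
proof
  fix r assume "r \<in> ball_L (Zinvp p) (Lp p) R"
  hence rZ: "r \<in> Zinvp p" and LR: "Lp p r \<le> R" by (auto simp: ball_L_def)
  have p0: "p > 1" using pr prime_gt_1_nat by blast
  obtain c k where rc: "r = of_int c / of_nat p ^ k" using rZ by (auto simp: Zinvp_def)
  have ex: "\<exists>j. r = of_int j / of_nat p ^ K"
  proof (cases "r = 0")
    case True thus ?thesis by (intro exI[of _ 0]) simp
  next
    case False
    then obtain a m where ra: "r = of_int a / of_nat p ^ m" and
      le: "padic_norm p r \<le> real p ^ m" and eqm: "m > 0 \<Longrightarrow> padic_norm p r = real p ^ m"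
      using core[OF pr rc] by metis
    have "(0::real) \<le> real_of_rat \<bar>r\<bar>" by simp
    hence "padic_norm p r \<le> R" using LR unfolding Lp_def by linarith
    have mK: "m \<le> K"
    proof (cases "m = 0")
      case False
      hence "real p ^ m < real p ^ (K+1)" using eqm \<open>padic_norm p r \<le> R\<close> RK by simp
      hence "m < K + 1" using p0 power_strict_increasing_iff[of "real p" m "K+1"] by simp
      thus ?thesis by simp
    qed simp
    have "r = of_int (a * int p ^ (K - m)) / of_nat p ^ K"
    proof -
      have "(of_nat p ^ K :: rat) = of_nat p ^ m * of_nat p ^ (K - m)"
        using mK by (simp add: power_add[symmetric])
      thus ?thesis using ra p0 by simp
    qed
    thus ?thesis by blast
  qed
  then obtain j where rj: "r = of_int j / of_nat p ^ K" by blast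
  have "real_of_rat \<bar>r\<bar> \<le> R" using LR pn_nonneg[of p r] p0 unfolding Lp_def by simp
  hence "\<bar>real_of_int j\<bar> / real p ^ K \<le> R" using rj by (simp add: of_rat_divide of_rat_power abs_div_pos ratabs)
  hence "\<bar>real_of_int j\<bar> \<le> R * real p ^ K" using p0 by (simp add: divide_le_eq)
  hence "\<bar>j\<bar> \<le> \<lfloor>R * real p ^ K\<rfloor>" by (simp add: le_floor_iff)
  thus "r \<in> (\<lambda>j. of_int j / of_nat p ^ K :: rat) ` {-\<lfloor>R * real p ^ K\<rfloor>..\<lfloor>R * real p ^ K\<rfloor>}"
    using rj by (intro image_eqI[of _ _ j]) (auto simp: abs_le_iff)
qed

lemma proper: "prime p \<Longrightarrow> proper_L (Zinvp p) (Lp p)"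
  unfolding proper_L_def
proof
  fix R assume pr: "prime p"
  have p0: "real p > 1" using pr prime_gt_1_nat by simp
  obtain n where "R < real p ^ n" using real_arch_pow[OF p0] by blast
  moreover have "real p ^ n \<le> real p ^ (n+1)" using p0 by (intro power_increasing) auto
  ultimately have "R < real p ^ (n+1)" by linarith
  from upper[OF pr this] show "finite (ball_L (Zinvp p) (Lp p) R)"
    by (rule finite_subset) simp
qed

lemma lower:
  fixes p :: nat and R :: real
  assumes pr: "prime p" and qR: "real p ^ k \<le> R / 2"
  shows "(\<lambda>j. of_int j / of_nat p ^ k :: rat) ` {-\<lfloor>real p ^ k * R / 2\<rfloor>..\<lfloor>real p ^ k * R / 2\<rfloor>}
     \<subseteq> ball_L (Zinvp p) (Lp p) R"
proof
  fix r assume "r \<in> (\<lambda>j. of_int j / of_nat p ^ k :: rat) ` {-\<lfloor>real p ^ k * R / 2\<rfloor>..\<lfloor>real p ^ k * R / 2\<rfloor>}"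
  then obtain j where rj: "r = of_int j / of_nat p ^ k" and "j \<in> {-\<lfloor>real p ^ k * R / 2\<rfloor>..\<lfloor>real p ^ k * R / 2\<rfloor>}"
    by blast
  hence jb: "\<bar>j\<bar> \<le> \<lfloor>real p ^ k * R / 2\<rfloor>" by auto
  have p0: "p > 1" using pr prime_gt_1_nat by blast
  have rZ: "r \<in> Zinvp p" using rj by (auto simp: Zinvp_def)
  have n: "padic_norm p r \<le> R / 2"
  proof (cases "r = 0")
    case True
    have "padic_norm p r = 0" using True by (simp add: padic_norm_def)
    moreover have "real p ^ k \<ge> 0" by simp
    ultimately show ?thesis using qR by linarith
  next
    case False
    then obtain a m where "m \<le> k" "padic_norm p r \<le> real p ^ m"
      using core[OF pr rj] by metis
    moreover have "real p ^ m \<le> real p ^ k" using \<open>m \<le> k\<close> p0 by (simp add: power_increasing)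
    ultimately show ?thesis using qR by linarith
  qed
  have "real_of_int \<bar>j\<bar> \<le> real p ^ k * R / 2" using jb by (simp add: le_floor_iff)
  hence "\<bar>real_of_int j\<bar> / real p ^ k \<le> R / 2" using p0 by (simp add: divide_le_eq mult.commute)
  hence "real_of_rat \<bar>r\<bar> \<le> R / 2" using rj by (simp add: of_rat_divide of_rat_power abs_div_pos ratabs)
  thus "r \<in> ball_L (Zinvp p) (Lp p) R" using n rZ by (simp add: ball_L_def Lp_def)
qed

lemma card_img:
  assumes "p > 0"
  shows "card ((\<lambda>j. of_int j / of_nat p ^ k :: rat) ` {-N..N}) = card {-N..N}"
  by (rule card_image) (use assms in \<open>auto simp: inj_on_def\<close>)


lemma card_int_ivl: "N \<ge> 0 \<Longrightarrow> real (card {-N..(N::int)}) = 2 * real_of_int N + 1"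
  by simp

lemma floor_bound: "x \<ge> 0 \<Longrightarrow> 2 * real_of_int \<lfloor>x\<rfloor> + 1 \<ge> x"
proof -
  assume x: "x \<ge> 0"
  have "real_of_int \<lfloor>x\<rfloor> > x - 1" by (rule real_of_int_floor_gt_diff_one)
  moreover have "real_of_int \<lfloor>x\<rfloor> \<ge> 0" using x by simp
  ultimately show ?thesis by linarith
qed

lemma doubling:
  fixes p :: nat and R :: real
  assumes pr: "prime p" and R1: "R \<ge> 1"
  shows "real (card (ball_L (Zinvp p) (Lp p) (2 * R))) \<le> 4 * real p ^ 8 * real (card (ball_L (Zinvp p) (Lp p) R))"
proof -
  have p1: "p > 1" using pr prime_gt_1_nat by blast
  have p2: "real p \<ge> 2" using p1 by simp
  have "nat \<lfloor>2*R\<rfloor> \<ge> 1" using R1 by linarith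
  then obtain K where K1: "p ^ K \<le> nat \<lfloor>2*R\<rfloor>" and K2: "nat \<lfloor>2*R\<rfloor> < p ^ (K+1)"
    using ex_power_ivl1[of p "nat \<lfloor>2*R\<rfloor>"] p1 by auto
  have "real (p ^ K) \<le> real (nat \<lfloor>2*R\<rfloor>)" using K1 by (simp only: of_nat_le_iff)
  moreover have "real (nat \<lfloor>2*R\<rfloor>) = real_of_int \<lfloor>2*R\<rfloor>" by (rule of_nat_nat) (use R1 in linarith)
  ultimately have "real p ^ K \<le> real_of_int \<lfloor>2*R\<rfloor>" by simp
  hence pK: "real p ^ K \<le> 2 * R" using of_int_floor_le[of "2*R"] by linarith
  have "nat \<lfloor>2*R\<rfloor> + 1 \<le> p ^ (K+1)" using K2 by linarith
  hence "real (nat \<lfloor>2*R\<rfloor> + 1) \<le> real (p ^ (K+1))" by (simp only: of_nat_le_iff)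
  hence "real (nat \<lfloor>2*R\<rfloor>) + 1 \<le> real (p ^ (K+1))" by (simp only: of_nat_add of_nat_1)
  moreover have "real (nat \<lfloor>2*R\<rfloor>) = real_of_int \<lfloor>2*R\<rfloor>" by (rule of_nat_nat) (use R1 in linarith)
  moreover have "2*R < real_of_int \<lfloor>2*R\<rfloor> + 1" by (rule real_of_int_floor_add_one_gt)
  moreover have "real (p ^ (K+1)) = real p ^ (K+1)" by simp
  ultimately have RK: "2 * R < real p ^ (K+1)" by linarith
  define N where "N = \<lfloor>2 * R * real p ^ K\<rfloor>"
  have N0: "N \<ge> 0" using R1 unfolding N_def by simp
  have fin: "finite (ball_L (Zinvp p) (Lp p) R)" using proper[OF pr] by (simp add: proper_L_def)
  have "card (ball_L (Zinvp p) (Lp p) (2 * R)) \<le> card ((\<lambda>j. of_int j / of_nat p ^ K :: rat) ` {-N..N})"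
    using upper[OF pr RK] unfolding N_def by (intro card_mono) auto
  also have "\<dots> = card {-N..N}" using card_img[of p K N] p1 by simp
  finally have "real (card (ball_L (Zinvp p) (Lp p) (2 * R))) \<le> 2 * real_of_int N + 1"
    using card_int_ivl[OF N0] by linarith
  also have "\<dots> \<le> 4 * R * real p ^ K + 1" unfolding N_def by linarith
  finally have U: "real (card (ball_L (Zinvp p) (Lp p) (2 * R))) \<le> 4 * R * real p ^ K + 1" .
  show ?thesis
  proof (cases "K \<ge> 2")
    case True
    obtain k where kK: "K = k + 2" using True by (metis add.commute le_Suc_ex)
    have Kk: "real p ^ K = real p ^ k * real p ^ 2" unfolding kK by (rule power_add)
    have "(2::real) ^ 2 \<le> real p ^ 2" by (rule power_mono) (use p2 in auto)
    hence pp: "real p ^ 2 \<ge> 4" by simp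
    have qk0: "real p ^ k > 0" using p1 by simp
    have "real p ^ k * 4 \<le> real p ^ k * real p ^ 2" using pp qk0 by (intro mult_left_mono) auto
    hence "real p ^ k * 4 \<le> 2 * R" using pK Kk by linarith
    hence qR: "real p ^ k \<le> R / 2" by simp
    define M where "M = \<lfloor>real p ^ k * R / 2\<rfloor>"
    have M0: "M \<ge> 0" unfolding M_def using qk0 R1 by simp
    have "card ((\<lambda>j. of_int j / of_nat p ^ k :: rat) ` {-M..M}) \<le> card (ball_L (Zinvp p) (Lp p) R)"
      unfolding M_def by (rule card_mono[OF fin lower[OF pr qR]])
    moreover have "card ((\<lambda>j. of_int j / of_nat p ^ k :: rat) ` {-M..M}) = card {-M..M}"
      using card_img[of p k M] p1 by simp
    ultimately have "card {-M..M} \<le> card (ball_L (Zinvp p) (Lp p) R)" by simp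
    hence "2 * real_of_int M + 1 \<le> real (card (ball_L (Zinvp p) (Lp p) R))"
      using card_int_ivl[OF M0] by linarith
    moreover have "real p ^ k * R / 2 \<ge> 0" using qk0 R1 by simp
    ultimately have L: "real p ^ k * R / 2 \<le> real (card (ball_L (Zinvp p) (Lp p) R))"
      using floor_bound[of "real p ^ k * R / 2"] unfolding M_def by linarith
    have "1 \<le> real p ^ K" using p2 by simp
    hence "1 * 1 \<le> R * real p ^ K" using R1 by (intro mult_mono) auto
    hence "4 * R * real p ^ K + 1 \<le> 10 * real p ^ 2 * (real p ^ k * R / 2)" using Kk by simp
    also have "\<dots> \<le> 4 * real p ^ 8 * (real p ^ k * R / 2)"
    proof -
      have "real p ^ 6 \<ge> 2 ^ 6" using p2 by (intro power_mono) auto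
      hence "real p ^ 2 * 64 \<le> real p ^ 2 * real p ^ 6" by (intro mult_left_mono) auto
      moreover have "real p ^ 8 = real p ^ 2 * real p ^ 6" by (simp flip: power_add)
      ultimately have "10 * real p ^ 2 \<le> 4 * real p ^ 8" using pp by linarith
      thus ?thesis using qk0 R1 by (intro mult_right_mono) auto
    qed
    also have "\<dots> \<le> 4 * real p ^ 8 * real (card (ball_L (Zinvp p) (Lp p) R))"
      using L by (intro mult_left_mono) auto
    finally show ?thesis using U by linarith
  next
    case False
    have "K = 0 \<or> K = 1" using False by linarith
    hence "real p ^ K \<le> real p" using p1 by auto
    have "real p ^ (K+1) \<le> real p ^ 2" using False p1 by (intro power_increasing) auto
    hence R2: "2 * R < real p ^ 2" using RK by linarith
    have "4 * R * real p ^ K + 1 \<le> 4 * R * real p + 1"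
      using \<open>real p ^ K \<le> real p\<close> R1 by simp
    also have "\<dots> \<le> 2 * real p ^ 3 + 1"
    proof -
      have "(2 * R) * real p \<le> real p ^ 2 * real p" using R2 by (intro mult_right_mono) auto
      moreover have "real p ^ 3 = real p ^ 2 * real p" by (simp flip: power_Suc2)
      ultimately show ?thesis by linarith
    qed
    also have "\<dots> \<le> 4 * real p ^ 8"
    proof -
      have "real p ^ 3 \<le> real p ^ 8" using p2 by (intro power_increasing) auto
      moreover have "1 \<le> real p ^ 8" using p2 by simp
      ultimately show ?thesis by linarith
    qed
    finally have U2: "real (card (ball_L (Zinvp p) (Lp p) (2 * R))) \<le> 4 * real p ^ 8" using U by linarith
    have L0: "Lp p 0 = 0" by (simp add: Lp_def padic_norm_def)
    have "(0::rat) = of_int 0 / of_nat p ^ 0" by simp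
    hence "(0::rat) \<in> Zinvp p" unfolding Zinvp_def by blast
    hence "0 \<in> ball_L (Zinvp p) (Lp p) R" using R1 L0 unfolding ball_L_def by simp
    hence "ball_L (Zinvp p) (Lp p) R \<noteq> {}" by blast
    hence "card (ball_L (Zinvp p) (Lp p) R) > 0" using fin by (simp add: card_gt_0_iff)
    hence "card (ball_L (Zinvp p) (Lp p) R) \<ge> 1" by simp
    hence "4 * real p ^ 8 * 1 \<le> 4 * real p ^ 8 * real (card (ball_L (Zinvp p) (Lp p) R))"
      by (intro mult_left_mono) auto
    thus ?thesis using U2 by linarith
  qed
qed


lemma iter:
  fixes p :: nat and R :: real
  assumes pr: "prime p" and R1: "R \<ge> 1"
  shows "real (card (ball_L (Zinvp p) (Lp p) (2 ^ n * R))) \<le> (4 * real p ^ 8) ^ n * real (card (ball_L (Zinvp p) (Lp p) R))"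
proof (induction n)
  case 0 thus ?case by simp
next
  case (Suc n)
  have "(1::real) \<le> 2 ^ n" by simp
  hence "1 * 1 \<le> 2 ^ n * R" using R1 by (intro mult_mono) auto
  hence "2 ^ n * R \<ge> 1" by simp
  from doubling[OF pr this]
  have "real (card (ball_L (Zinvp p) (Lp p) (2 ^ Suc n * R))) \<le> 4 * real p ^ 8 * real (card (ball_L (Zinvp p) (Lp p) (2 ^ n * R)))"
    by (simp add: mult.assoc)
  also have "\<dots> \<le> 4 * real p ^ 8 * ((4 * real p ^ 8) ^ n * real (card (ball_L (Zinvp p) (Lp p) R)))"
    using Suc.IH by (intro mult_left_mono) auto
  finally show ?case by (simp add: mult.assoc)
qed

theorem lemma3p6:
  fixes p :: nat
  assumes "prime p"
  shows "bounded_dilation (Zinvp p) (Lp p) (real p)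
       \<and> bounded_doubling (Zinvp p) (Lp p) (4 * real p ^ 8)"
proof
  note pr = assms
  show D: "bounded_doubling (Zinvp p) (Lp p) (4 * real p ^ 8)"
    unfolding bounded_doubling_def using proper[OF pr] doubling[OF pr] by blast
  have "\<forall>R\<ge>1. real (card (ball_L (Zinvp p) (Lp p) (real p * R))) \<le> (4 * real p ^ 8) ^ p * real (card (ball_L (Zinvp p) (Lp p) R))"
  proof (intro allI impI)
    fix R :: real assume R1: "R \<ge> 1"
    have "real p < real ((2::nat) ^ p)" using less_exp[of p] by (simp only: of_nat_less_iff)
    hence "real p \<le> 2 ^ p" by simp
    hence "real p * R \<le> 2 ^ p * R" using R1 by (intro mult_right_mono) auto
    hence "ball_L (Zinvp p) (Lp p) (real p * R) \<subseteq> ball_L (Zinvp p) (Lp p) (2 ^ p * R)"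
      unfolding ball_L_def by auto
    moreover have "finite (ball_L (Zinvp p) (Lp p) (2 ^ p * R))" using proper[OF pr] by (simp add: proper_L_def)
    ultimately have "card (ball_L (Zinvp p) (Lp p) (real p * R)) \<le> card (ball_L (Zinvp p) (Lp p) (2 ^ p * R))"
      by (rule card_mono[rotated])
    hence "real (card (ball_L (Zinvp p) (Lp p) (real p * R))) \<le> real (card (ball_L (Zinvp p) (Lp p) (2 ^ p * R)))"
      by simp
    also have "\<dots> \<le> (4 * real p ^ 8) ^ p * real (card (ball_L (Zinvp p) (Lp p) R))"
      by (rule iter[OF pr R1])
    finally show "real (card (ball_L (Zinvp p) (Lp p) (real p * R))) \<le> (4 * real p ^ 8) ^ p * real (card (ball_L (Zinvp p) (Lp p) R))" .
  qed
  thus "bounded_dilation (Zinvp p) (Lp p) (real p)"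
    unfolding bounded_dilation_def using proper[OF pr] by blast
qed

end
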